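(* Let $\mathcal{L}$ and $\mathcal{K}$ be $2$-categories with pseudolimits of arrows, and let $U\colon\mathcal{L}\to\mathcal{K}$ be a $2$-functor preserving pseudolimits of arrows. Then $U$ preserves equivalences, injective equivalences, retract equivalences, normal retract equivalences, representable isofibrations, and normal isofibrations.
   Context: An equivalence is a morphism $f\colon A\to B$ with $g\colon B\to A$ and invertible $2$-cells $1\cong gf$, $fg\cong 1$; an injective equivalence is an equivalence with a retraction; a retract equivalence is an equivalence with a section; a normal retract equivalence is a retract equivalence which is also a normal isofibration. The pseudolimit of an arrow $f\colon A\to B$ is an object $L_f$ with $u_f\colon L_f\to A$, $v_f\colon L_f\to B$ and invertible $\lambda_f\colon v_f\cong fu_f$, universal among such data; $U$ preserves it if $(UL_f,Uu_f,Uv_f,U\lambda_f)$ is a pseudolimit of $Uf$. A morphism $f\colon A\to B$ is a representable isofibration if for every object $X$, given $g\colon X\to A$, $h\colon X\to B$ and invertible $\alpha\colon fg\cong h$, there exist $h'\colon X\to A$ and invertible $\alpha'\colon g\cong h'$ with $f\alpha'=\alpha$. A cleavage is a choice of such $(\alpha',h')$ for every $(g,\alpha,h)$, natural in $X$; it is normal if $\alpha'$ is an identity whenever $\alpha$ is. A normal isofibration is a representable isofibration admitting a normal cleavage. *)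

theory Defs
  imports Main
begin

text \<open>A (strict) 2-category presented by its sets of objects, 1-cells and 2-cells,
  with source/target of 1-cells, domain/codomain (1-cells) of 2-cells, composition of
  1-cells (cmp g f = g after f), identity 1-cells, vertical composition
  (vcmp b a = b after a), horizontal composition (hcmp b a, with b on the left) and
  identity 2-cells.  Operations are only meaningful on composable arguments.\<close>

record ('o, 'm, 'c) twocat =
  Obj  :: "'o set"
  Arr  :: "'m set"
  Cell :: "'c set"
  src  :: "'m \<Rightarrow> 'o"
  tgt  :: "'m \<Rightarrow> 'o"
  dom2 :: "'c \<Rightarrow> 'm"
  cod2 :: "'c \<Rightarrow> 'm"
  cmp  :: "'m \<Rightarrow> 'm \<Rightarrow> 'm"
  ide  :: "'o \<Rightarrow> 'm"
  vcmp :: "'c \<Rightarrow> 'c \<Rightarrow> 'c"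
  hcmp :: "'c \<Rightarrow> 'c \<Rightarrow> 'c"
  idc  :: "'m \<Rightarrow> 'c"

definition hom :: "('o, 'm, 'c, 'x) twocat_scheme \<Rightarrow> 'o \<Rightarrow> 'o \<Rightarrow> 'm set" where
  "hom C a b = {f \<in> Arr C. src C f = a \<and> tgt C f = b}"

definition cells :: "('o, 'm, 'c, 'x) twocat_scheme \<Rightarrow> 'm \<Rightarrow> 'm \<Rightarrow> 'c set" where
  "cells C f g = {\<alpha> \<in> Cell C. dom2 C \<alpha> = f \<and> cod2 C \<alpha> = g}"

definition two_category :: "('o, 'm, 'c, 'x) twocat_scheme \<Rightarrow> bool" where
  "two_category C \<longleftrightarrow>
     \<comment> \<open>1-cells\<close>
     (\<forall>f \<in> Arr C. src C f \<in> Obj C \<and> tgt C f \<in> Obj C) \<and>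
     (\<forall>a \<in> Obj C. ide C a \<in> hom C a a) \<and>
     (\<forall>f \<in> Arr C. \<forall>g \<in> Arr C. src C g = tgt C f \<longrightarrow>
        cmp C g f \<in> hom C (src C f) (tgt C g)) \<and>
     (\<forall>f \<in> Arr C. \<forall>g \<in> Arr C. \<forall>h \<in> Arr C. src C g = tgt C f \<longrightarrow> src C h = tgt C g \<longrightarrow>
        cmp C h (cmp C g f) = cmp C (cmp C h g) f) \<and>
     (\<forall>f \<in> Arr C. cmp C (ide C (tgt C f)) f = f \<and> cmp C f (ide C (src C f)) = f) \<and>
     \<comment> \<open>2-cells go between parallel 1-cells\<close>
     (\<forall>\<alpha> \<in> Cell C. dom2 C \<alpha> \<in> Arr C \<and> cod2 C \<alpha> \<in> Arr C \<and>
        src C (dom2 C \<alpha>) = src C (cod2 C \<alpha>) \<and> tgt C (dom2 C \<alpha>) = tgt C (cod2 C \<alpha>)) \<and>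
     (\<forall>f \<in> Arr C. idc C f \<in> cells C f f) \<and>
     \<comment> \<open>vertical composition\<close>
     (\<forall>\<alpha> \<in> Cell C. \<forall>\<beta> \<in> Cell C. dom2 C \<beta> = cod2 C \<alpha> \<longrightarrow>
        vcmp C \<beta> \<alpha> \<in> cells C (dom2 C \<alpha>) (cod2 C \<beta>)) \<and>
     (\<forall>\<alpha> \<in> Cell C. \<forall>\<beta> \<in> Cell C. \<forall>\<gamma> \<in> Cell C. dom2 C \<beta> = cod2 C \<alpha> \<longrightarrow> dom2 C \<gamma> = cod2 C \<beta> \<longrightarrow>
        vcmp C \<gamma> (vcmp C \<beta> \<alpha>) = vcmp C (vcmp C \<gamma> \<beta>) \<alpha>) \<and>
     (\<forall>\<alpha> \<in> Cell C. vcmp C (idc C (cod2 C \<alpha>)) \<alpha> = \<alpha> \<and> vcmp C \<alpha> (idc C (dom2 C \<alpha>)) = \<alpha>) \<and>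
     \<comment> \<open>horizontal composition\<close>
     (\<forall>\<alpha> \<in> Cell C. \<forall>\<beta> \<in> Cell C. src C (dom2 C \<beta>) = tgt C (dom2 C \<alpha>) \<longrightarrow>
        hcmp C \<beta> \<alpha> \<in> cells C (cmp C (dom2 C \<beta>) (dom2 C \<alpha>)) (cmp C (cod2 C \<beta>) (cod2 C \<alpha>))) \<and>
     (\<forall>\<alpha> \<in> Cell C. \<forall>\<beta> \<in> Cell C. \<forall>\<gamma> \<in> Cell C.
        src C (dom2 C \<beta>) = tgt C (dom2 C \<alpha>) \<longrightarrow> src C (dom2 C \<gamma>) = tgt C (dom2 C \<beta>) \<longrightarrow>
        hcmp C \<gamma> (hcmp C \<beta> \<alpha>) = hcmp C (hcmp C \<gamma> \<beta>) \<alpha>) \<and>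
     (\<forall>\<alpha> \<in> Cell C. hcmp C (idc C (ide C (tgt C (dom2 C \<alpha>)))) \<alpha> = \<alpha> \<and>
        hcmp C \<alpha> (idc C (ide C (src C (dom2 C \<alpha>)))) = \<alpha>) \<and>
     (\<forall>f \<in> Arr C. \<forall>g \<in> Arr C. src C g = tgt C f \<longrightarrow>
        hcmp C (idc C g) (idc C f) = idc C (cmp C g f)) \<and>
     \<comment> \<open>interchange law\<close>
     (\<forall>\<alpha> \<in> Cell C. \<forall>\<beta> \<in> Cell C. \<forall>\<gamma> \<in> Cell C. \<forall>\<delta> \<in> Cell C.
        dom2 C \<beta> = cod2 C \<alpha> \<longrightarrow> dom2 C \<delta> = cod2 C \<gamma> \<longrightarrow> src C (dom2 C \<gamma>) = tgt C (dom2 C \<alpha>) \<longrightarrow>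
        hcmp C (vcmp C \<delta> \<gamma>) (vcmp C \<beta> \<alpha>) = vcmp C (hcmp C \<delta> \<beta>) (hcmp C \<gamma> \<alpha>))"

definition lwhisk :: "('o, 'm, 'c, 'x) twocat_scheme \<Rightarrow> 'm \<Rightarrow> 'c \<Rightarrow> 'c" where
  "lwhisk C f \<alpha> = hcmp C (idc C f) \<alpha>"

definition rwhisk :: "('o, 'm, 'c, 'x) twocat_scheme \<Rightarrow> 'c \<Rightarrow> 'm \<Rightarrow> 'c" where
  "rwhisk C \<alpha> h = hcmp C \<alpha> (idc C h)"

definition invertible2 :: "('o, 'm, 'c, 'x) twocat_scheme \<Rightarrow> 'c \<Rightarrow> bool" where
  "invertible2 C \<alpha> \<longleftrightarrow> \<alpha> \<in> Cell C \<and>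
     (\<exists>\<beta> \<in> cells C (cod2 C \<alpha>) (dom2 C \<alpha>).
        vcmp C \<beta> \<alpha> = idc C (dom2 C \<alpha>) \<and> vcmp C \<alpha> \<beta> = idc C (cod2 C \<alpha>))"

record ('o1, 'm1, 'c1, 'o2, 'm2, 'c2) twofun =
  fo :: "'o1 \<Rightarrow> 'o2"
  fm :: "'m1 \<Rightarrow> 'm2"
  fc :: "'c1 \<Rightarrow> 'c2"

definition two_functor ::
  "('o1, 'm1, 'c1, 'x) twocat_scheme \<Rightarrow> ('o2, 'm2, 'c2, 'y) twocat_scheme \<Rightarrow>
   ('o1, 'm1, 'c1, 'o2, 'm2, 'c2, 'z) twofun_scheme \<Rightarrow> bool" where
  "two_functor L K U \<longleftrightarrow> two_category L \<and> two_category K \<and>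
     (\<forall>a \<in> Obj L. fo U a \<in> Obj K) \<and>
     (\<forall>f \<in> Arr L. fm U f \<in> hom K (fo U (src L f)) (fo U (tgt L f))) \<and>
     (\<forall>\<alpha> \<in> Cell L. fc U \<alpha> \<in> cells K (fm U (dom2 L \<alpha>)) (fm U (cod2 L \<alpha>))) \<and>
     (\<forall>a \<in> Obj L. fm U (ide L a) = ide K (fo U a)) \<and>
     (\<forall>f \<in> Arr L. \<forall>g \<in> Arr L. src L g = tgt L f \<longrightarrow> fm U (cmp L g f) = cmp K (fm U g) (fm U f)) \<and>
     (\<forall>f \<in> Arr L. fc U (idc L f) = idc K (fm U f)) \<and>
     (\<forall>\<alpha> \<in> Cell L. \<forall>\<beta> \<in> Cell L. dom2 L \<beta> = cod2 L \<alpha> \<longrightarrow>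
        fc U (vcmp L \<beta> \<alpha>) = vcmp K (fc U \<beta>) (fc U \<alpha>)) \<and>
     (\<forall>\<alpha> \<in> Cell L. \<forall>\<beta> \<in> Cell L. src L (dom2 L \<beta>) = tgt L (dom2 L \<alpha>) \<longrightarrow>
        fc U (hcmp L \<beta> \<alpha>) = hcmp K (fc U \<beta>) (fc U \<alpha>))"

text \<open>(L, u, v, lambda) is a pseudolimit of f : A \<rightarrow> B: u : L \<rightarrow> A, v : L \<rightarrow> B and
  lambda : v \<cong> f u invertible, universal in the (strict) 2-dimensional sense: for each
  object X, the functor from C(X,L) to pseudo-cones over f with vertex X is an
  isomorphism of categories (bijective on objects and on morphisms).\<close>

definition pseudolimit ::
  "('o, 'm, 'c, 'x) twocat_scheme \<Rightarrow> 'm \<Rightarrow> 'o \<Rightarrow> 'm \<Rightarrow> 'm \<Rightarrow> 'c \<Rightarrow> bool" where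
  "pseudolimit C f L u v lam \<longleftrightarrow>
     f \<in> Arr C \<and> L \<in> Obj C \<and>
     u \<in> hom C L (src C f) \<and> v \<in> hom C L (tgt C f) \<and>
     lam \<in> cells C v (cmp C f u) \<and> invertible2 C lam \<and>
     \<comment> \<open>one-dimensional universal property\<close>
     (\<forall>X \<in> Obj C. \<forall>p \<in> hom C X (src C f). \<forall>q \<in> hom C X (tgt C f).
        \<forall>\<theta> \<in> cells C q (cmp C f p). invertible2 C \<theta> \<longrightarrow>
          (\<exists>!h. h \<in> hom C X L \<and> cmp C u h = p \<and> cmp C v h = q \<and> rwhisk C lam h = \<theta>)) \<and>
     \<comment> \<open>two-dimensional universal property\<close>
     (\<forall>X \<in> Obj C. \<forall>h \<in> hom C X L. \<forall>k \<in> hom C X L.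
        \<forall>\<alpha> \<in> cells C (cmp C u h) (cmp C u k). \<forall>\<beta> \<in> cells C (cmp C v h) (cmp C v k).
          vcmp C (lwhisk C f \<alpha>) (rwhisk C lam h) = vcmp C (rwhisk C lam k) \<beta> \<longrightarrow>
          (\<exists>!\<gamma>. \<gamma> \<in> cells C h k \<and> lwhisk C u \<gamma> = \<alpha> \<and> lwhisk C v \<gamma> = \<beta>))"

definition has_pseudolimits_of_arrows :: "('o, 'm, 'c, 'x) twocat_scheme \<Rightarrow> bool" where
  "has_pseudolimits_of_arrows C \<longleftrightarrow>
     (\<forall>f \<in> Arr C. \<exists>L u v lam. pseudolimit C f L u v lam)"

definition preserves_pseudolimits_of_arrows ::
  "('o1, 'm1, 'c1, 'x) twocat_scheme \<Rightarrow> ('o2, 'm2, 'c2, 'y) twocat_scheme \<Rightarrow>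
   ('o1, 'm1, 'c1, 'o2, 'm2, 'c2, 'z) twofun_scheme \<Rightarrow> bool" where
  "preserves_pseudolimits_of_arrows L K U \<longleftrightarrow>
     (\<forall>f P u v lam. pseudolimit L f P u v lam \<longrightarrow>
        pseudolimit K (fm U f) (fo U P) (fm U u) (fm U v) (fc U lam))"

definition equivalence :: "('o, 'm, 'c, 'x) twocat_scheme \<Rightarrow> 'm \<Rightarrow> bool" where
  "equivalence C f \<longleftrightarrow> f \<in> Arr C \<and>
     (\<exists>g \<in> hom C (tgt C f) (src C f).
        (\<exists>\<eta> \<in> cells C (ide C (src C f)) (cmp C g f). invertible2 C \<eta>) \<and>
        (\<exists>\<epsilon> \<in> cells C (cmp C f g) (ide C (tgt C f)). invertible2 C \<epsilon>))"

definition injective_equivalence :: "('o, 'm, 'c, 'x) twocat_scheme \<Rightarrow> 'm \<Rightarrow> bool" where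
  "injective_equivalence C f \<longleftrightarrow> equivalence C f \<and>
     (\<exists>r \<in> hom C (tgt C f) (src C f). cmp C r f = ide C (src C f))"

definition retract_equivalence :: "('o, 'm, 'c, 'x) twocat_scheme \<Rightarrow> 'm \<Rightarrow> bool" where
  "retract_equivalence C f \<longleftrightarrow> equivalence C f \<and>
     (\<exists>s \<in> hom C (tgt C f) (src C f). cmp C f s = ide C (tgt C f))"

definition repr_isofibration :: "('o, 'm, 'c, 'x) twocat_scheme \<Rightarrow> 'm \<Rightarrow> bool" where
  "repr_isofibration C f \<longleftrightarrow> f \<in> Arr C \<and>
     (\<forall>X \<in> Obj C. \<forall>g \<in> hom C X (src C f). \<forall>h \<in> hom C X (tgt C f).
        \<forall>\<alpha> \<in> cells C (cmp C f g) h. invertible2 C \<alpha> \<longrightarrow>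
          (\<exists>h' \<in> hom C X (src C f). \<exists>\<alpha>' \<in> cells C g h'.
             invertible2 C \<alpha>' \<and> lwhisk C f \<alpha>' = \<alpha>))"

text \<open>A cleavage assigns to each (g, \<alpha>, h) (with X = src g, h = cod \<alpha>) a pair
  (\<alpha>', h') as above, naturally in X: restricting along k : Y \<rightarrow> X commutes with the
  choice.\<close>

definition cleavage ::
  "('o, 'm, 'c, 'x) twocat_scheme \<Rightarrow> 'm \<Rightarrow> ('m \<Rightarrow> 'c \<Rightarrow> 'c \<times> 'm) \<Rightarrow> bool" where
  "cleavage C f cl \<longleftrightarrow> f \<in> Arr C \<and>
     (\<forall>X \<in> Obj C. \<forall>g \<in> hom C X (src C f). \<forall>h \<in> hom C X (tgt C f).
        \<forall>\<alpha> \<in> cells C (cmp C f g) h. invertible2 C \<alpha> \<longrightarrow>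
          snd (cl g \<alpha>) \<in> hom C X (src C f) \<and> fst (cl g \<alpha>) \<in> cells C g (snd (cl g \<alpha>)) \<and>
          invertible2 C (fst (cl g \<alpha>)) \<and> lwhisk C f (fst (cl g \<alpha>)) = \<alpha> \<and>
          (\<forall>Y \<in> Obj C. \<forall>k \<in> hom C Y X.
             cl (cmp C g k) (rwhisk C \<alpha> k) =
               (rwhisk C (fst (cl g \<alpha>)) k, cmp C (snd (cl g \<alpha>)) k)))"

definition normal_cleavage ::
  "('o, 'm, 'c, 'x) twocat_scheme \<Rightarrow> 'm \<Rightarrow> ('m \<Rightarrow> 'c \<Rightarrow> 'c \<times> 'm) \<Rightarrow> bool" where
  "normal_cleavage C f cl \<longleftrightarrow> cleavage C f cl \<and>
     (\<forall>X \<in> Obj C. \<forall>g \<in> hom C X (src C f).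
        fst (cl g (idc C (cmp C f g))) = idc C g)"

definition normal_isofibration :: "('o, 'm, 'c, 'x) twocat_scheme \<Rightarrow> 'm \<Rightarrow> bool" where
  "normal_isofibration C f \<longleftrightarrow> repr_isofibration C f \<and> (\<exists>cl. normal_cleavage C f cl)"

definition normal_retract_equivalence :: "('o, 'm, 'c, 'x) twocat_scheme \<Rightarrow> 'm \<Rightarrow> bool" where
  "normal_retract_equivalence C f \<longleftrightarrow> retract_equivalence C f \<and> normal_isofibration C f"

end

theory Submission
  imports Defs
begin

locale tc = fixes C :: "('o,'m,'c,'x) twocat_scheme" assumes tc: "two_category C"
begin

lemmas ax = tc[unfolded two_category_def]

lemma arr_st: "f \<in> Arr C \<Longrightarrow> src C f \<in> Obj C" "f \<in> Arr C \<Longrightarrow> tgt C f \<in> Obj C"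
  using ax[THEN conjunct1] unfolding hom_def cells_def by auto

lemma ide_in [simp]: "a \<in> Obj C \<Longrightarrow> ide C a \<in> Arr C" "a \<in> Obj C \<Longrightarrow> src C (ide C a) = a"
  "a \<in> Obj C \<Longrightarrow> tgt C (ide C a) = a"
  using ax[THEN conjunct2, THEN conjunct1] unfolding hom_def cells_def by auto

lemma cmp_in [simp]: "f \<in> Arr C \<Longrightarrow> g \<in> Arr C \<Longrightarrow> src C g = tgt C f \<Longrightarrow> cmp C g f \<in> Arr C"
  "f \<in> Arr C \<Longrightarrow> g \<in> Arr C \<Longrightarrow> src C g = tgt C f \<Longrightarrow> src C (cmp C g f) = src C f"
  "f \<in> Arr C \<Longrightarrow> g \<in> Arr C \<Longrightarrow> src C g = tgt C f \<Longrightarrow> tgt C (cmp C g f) = tgt C g"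
  using ax[THEN conjunct2, THEN conjunct2, THEN conjunct1] unfolding hom_def cells_def by auto

lemma cmp_assoc: "f \<in> Arr C \<Longrightarrow> g \<in> Arr C \<Longrightarrow> h \<in> Arr C \<Longrightarrow> src C g = tgt C f \<Longrightarrow> src C h = tgt C g \<Longrightarrow>
        cmp C h (cmp C g f) = cmp C (cmp C h g) f"
  using ax[THEN conjunct2, THEN conjunct2, THEN conjunct2, THEN conjunct1] unfolding hom_def cells_def by auto

lemma cmp_ide [simp]: "f \<in> Arr C \<Longrightarrow> cmp C (ide C (tgt C f)) f = f"
  "f \<in> Arr C \<Longrightarrow> cmp C f (ide C (src C f)) = f"
  using ax[THEN conjunct2, THEN conjunct2, THEN conjunct2, THEN conjunct2, THEN conjunct1] unfolding hom_def cells_def by auto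

lemma cmp_ide' [simp]: "f \<in> Arr C \<Longrightarrow> tgt C f = a \<Longrightarrow> cmp C (ide C a) f = f"
  "f \<in> Arr C \<Longrightarrow> src C f = a \<Longrightarrow> cmp C f (ide C a) = f"
  using cmp_ide by blast+

lemma cell_props: "\<alpha> \<in> Cell C \<Longrightarrow> dom2 C \<alpha> \<in> Arr C"  "\<alpha> \<in> Cell C \<Longrightarrow> cod2 C \<alpha> \<in> Arr C"
  "\<alpha> \<in> Cell C \<Longrightarrow> src C (cod2 C \<alpha>) = src C (dom2 C \<alpha>)"
  "\<alpha> \<in> Cell C \<Longrightarrow> tgt C (cod2 C \<alpha>) = tgt C (dom2 C \<alpha>)"
  using ax[THEN conjunct2, THEN conjunct2, THEN conjunct2, THEN conjunct2, THEN conjunct2, THEN conjunct1] unfolding hom_def cells_def by auto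

lemma idc_in [simp]: "f \<in> Arr C \<Longrightarrow> idc C f \<in> Cell C" "f \<in> Arr C \<Longrightarrow> dom2 C (idc C f) = f"
  "f \<in> Arr C \<Longrightarrow> cod2 C (idc C f) = f"
  using ax[THEN conjunct2, THEN conjunct2, THEN conjunct2, THEN conjunct2, THEN conjunct2, THEN conjunct2, THEN conjunct1] unfolding hom_def cells_def by auto

lemma vcmp_in [simp]: "\<alpha> \<in> Cell C \<Longrightarrow> \<beta> \<in> Cell C \<Longrightarrow> dom2 C \<beta> = cod2 C \<alpha> \<Longrightarrow> vcmp C \<beta> \<alpha> \<in> Cell C"
  "\<alpha> \<in> Cell C \<Longrightarrow> \<beta> \<in> Cell C \<Longrightarrow> dom2 C \<beta> = cod2 C \<alpha> \<Longrightarrow> dom2 C (vcmp C \<beta> \<alpha>) = dom2 C \<alpha>"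
  "\<alpha> \<in> Cell C \<Longrightarrow> \<beta> \<in> Cell C \<Longrightarrow> dom2 C \<beta> = cod2 C \<alpha> \<Longrightarrow> cod2 C (vcmp C \<beta> \<alpha>) = cod2 C \<beta>"
  using ax[THEN conjunct2, THEN conjunct2, THEN conjunct2, THEN conjunct2, THEN conjunct2, THEN conjunct2, THEN conjunct2, THEN conjunct1] unfolding hom_def cells_def by auto

lemma vcmp_assoc: "\<alpha> \<in> Cell C \<Longrightarrow> \<beta> \<in> Cell C \<Longrightarrow> \<gamma> \<in> Cell C \<Longrightarrow> dom2 C \<beta> = cod2 C \<alpha> \<Longrightarrow> dom2 C \<gamma> = cod2 C \<beta> \<Longrightarrow>
        vcmp C \<gamma> (vcmp C \<beta> \<alpha>) = vcmp C (vcmp C \<gamma> \<beta>) \<alpha>"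
  using ax[THEN conjunct2, THEN conjunct2, THEN conjunct2, THEN conjunct2, THEN conjunct2, THEN conjunct2, THEN conjunct2, THEN conjunct2, THEN conjunct1] unfolding hom_def cells_def by auto

lemma vcmp_idc [simp]: "\<alpha> \<in> Cell C \<Longrightarrow> vcmp C (idc C (cod2 C \<alpha>)) \<alpha> = \<alpha>"
  "\<alpha> \<in> Cell C \<Longrightarrow> vcmp C \<alpha> (idc C (dom2 C \<alpha>)) = \<alpha>"
  using ax[THEN conjunct2, THEN conjunct2, THEN conjunct2, THEN conjunct2, THEN conjunct2, THEN conjunct2, THEN conjunct2, THEN conjunct2, THEN conjunct2, THEN conjunct1] unfolding hom_def cells_def by auto

lemma hcmp_in [simp]: "\<alpha> \<in> Cell C \<Longrightarrow> \<beta> \<in> Cell C \<Longrightarrow> src C (dom2 C \<beta>) = tgt C (dom2 C \<alpha>) \<Longrightarrow> hcmp C \<beta> \<alpha> \<in> Cell C"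
  "\<alpha> \<in> Cell C \<Longrightarrow> \<beta> \<in> Cell C \<Longrightarrow> src C (dom2 C \<beta>) = tgt C (dom2 C \<alpha>) \<Longrightarrow> dom2 C (hcmp C \<beta> \<alpha>) = cmp C (dom2 C \<beta>) (dom2 C \<alpha>)"
  "\<alpha> \<in> Cell C \<Longrightarrow> \<beta> \<in> Cell C \<Longrightarrow> src C (dom2 C \<beta>) = tgt C (dom2 C \<alpha>) \<Longrightarrow> cod2 C (hcmp C \<beta> \<alpha>) = cmp C (cod2 C \<beta>) (cod2 C \<alpha>)"
  using ax[THEN conjunct2, THEN conjunct2, THEN conjunct2, THEN conjunct2, THEN conjunct2, THEN conjunct2, THEN conjunct2, THEN conjunct2, THEN conjunct2, THEN conjunct2, THEN conjunct1] unfolding hom_def cells_def by auto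

lemma hcmp_assoc: "\<alpha> \<in> Cell C \<Longrightarrow> \<beta> \<in> Cell C \<Longrightarrow> \<gamma> \<in> Cell C \<Longrightarrow>
        src C (dom2 C \<beta>) = tgt C (dom2 C \<alpha>) \<Longrightarrow> src C (dom2 C \<gamma>) = tgt C (dom2 C \<beta>) \<Longrightarrow>
        hcmp C \<gamma> (hcmp C \<beta> \<alpha>) = hcmp C (hcmp C \<gamma> \<beta>) \<alpha>"
  using ax[THEN conjunct2, THEN conjunct2, THEN conjunct2, THEN conjunct2, THEN conjunct2, THEN conjunct2, THEN conjunct2, THEN conjunct2, THEN conjunct2, THEN conjunct2, THEN conjunct2, THEN conjunct1] unfolding hom_def cells_def by auto

lemma hcmp_idc: "f \<in> Arr C \<Longrightarrow> g \<in> Arr C \<Longrightarrow> src C g = tgt C f \<Longrightarrow>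
        hcmp C (idc C g) (idc C f) = idc C (cmp C g f)"
  using ax[THEN conjunct2, THEN conjunct2, THEN conjunct2, THEN conjunct2, THEN conjunct2, THEN conjunct2, THEN conjunct2, THEN conjunct2, THEN conjunct2, THEN conjunct2, THEN conjunct2, THEN conjunct2, THEN conjunct2, THEN conjunct1] unfolding hom_def cells_def by auto

lemma interchange: "\<alpha> \<in> Cell C \<Longrightarrow> \<beta> \<in> Cell C \<Longrightarrow> \<gamma> \<in> Cell C \<Longrightarrow> \<delta> \<in> Cell C \<Longrightarrow>
        dom2 C \<beta> = cod2 C \<alpha> \<Longrightarrow> dom2 C \<delta> = cod2 C \<gamma> \<Longrightarrow> src C (dom2 C \<gamma>) = tgt C (dom2 C \<alpha>) \<Longrightarrow>
        hcmp C (vcmp C \<delta> \<gamma>) (vcmp C \<beta> \<alpha>) = vcmp C (hcmp C \<delta> \<beta>) (hcmp C \<gamma> \<alpha>)"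
  using ax[THEN conjunct2, THEN conjunct2, THEN conjunct2, THEN conjunct2, THEN conjunct2, THEN conjunct2, THEN conjunct2, THEN conjunct2, THEN conjunct2, THEN conjunct2, THEN conjunct2, THEN conjunct2, THEN conjunct2, THEN conjunct2] unfolding hom_def cells_def by auto


lemma rw_in [simp]: "\<alpha> \<in> Cell C \<Longrightarrow> k \<in> Arr C \<Longrightarrow> tgt C k = src C (dom2 C \<alpha>) \<Longrightarrow> rwhisk C \<alpha> k \<in> Cell C"
  "\<alpha> \<in> Cell C \<Longrightarrow> k \<in> Arr C \<Longrightarrow> tgt C k = src C (dom2 C \<alpha>) \<Longrightarrow> dom2 C (rwhisk C \<alpha> k) = cmp C (dom2 C \<alpha>) k"
  "\<alpha> \<in> Cell C \<Longrightarrow> k \<in> Arr C \<Longrightarrow> tgt C k = src C (dom2 C \<alpha>) \<Longrightarrow> cod2 C (rwhisk C \<alpha> k) = cmp C (cod2 C \<alpha>) k"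
  unfolding rwhisk_def by simp_all

lemma lw_in [simp]: "\<alpha> \<in> Cell C \<Longrightarrow> f \<in> Arr C \<Longrightarrow> src C f = tgt C (dom2 C \<alpha>) \<Longrightarrow> lwhisk C f \<alpha> \<in> Cell C"
  "\<alpha> \<in> Cell C \<Longrightarrow> f \<in> Arr C \<Longrightarrow> src C f = tgt C (dom2 C \<alpha>) \<Longrightarrow> dom2 C (lwhisk C f \<alpha>) = cmp C f (dom2 C \<alpha>)"
  "\<alpha> \<in> Cell C \<Longrightarrow> f \<in> Arr C \<Longrightarrow> src C f = tgt C (dom2 C \<alpha>) \<Longrightarrow> cod2 C (lwhisk C f \<alpha>) = cmp C f (cod2 C \<alpha>)"
  unfolding lwhisk_def by simp_all

lemma rw_rw: "\<alpha> \<in> Cell C \<Longrightarrow> k \<in> Arr C \<Longrightarrow> k' \<in> Arr C \<Longrightarrow> tgt C k = src C (dom2 C \<alpha>) \<Longrightarrow> tgt C k' = src C k \<Longrightarrow>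
   rwhisk C (rwhisk C \<alpha> k) k' = rwhisk C \<alpha> (cmp C k k')"
  unfolding rwhisk_def
  using hcmp_assoc[of "idc C k'" "idc C k" \<alpha>] hcmp_idc[of k' k] by simp

lemma lw_rw: "\<alpha> \<in> Cell C \<Longrightarrow> k \<in> Arr C \<Longrightarrow> f \<in> Arr C \<Longrightarrow> tgt C k = src C (dom2 C \<alpha>) \<Longrightarrow> src C f = tgt C (dom2 C \<alpha>) \<Longrightarrow>
   lwhisk C f (rwhisk C \<alpha> k) = rwhisk C (lwhisk C f \<alpha>) k"
  unfolding rwhisk_def lwhisk_def by (simp add: hcmp_assoc)

lemma rw_idc [simp]: "g \<in> Arr C \<Longrightarrow> k \<in> Arr C \<Longrightarrow> tgt C k = src C g \<Longrightarrow> rwhisk C (idc C g) k = idc C (cmp C g k)"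
  unfolding rwhisk_def by (simp add: hcmp_idc)

lemma lw_idc [simp]: "g \<in> Arr C \<Longrightarrow> f \<in> Arr C \<Longrightarrow> src C f = tgt C g \<Longrightarrow> lwhisk C f (idc C g) = idc C (cmp C f g)"
  unfolding lwhisk_def by (simp add: hcmp_idc)

lemma vcmp_idc_idc [simp]: "f \<in> Arr C \<Longrightarrow> vcmp C (idc C f) (idc C f) = idc C f"
  using vcmp_idc(1)[of "idc C f"] by simp

lemma rw_vcmp: "\<alpha> \<in> Cell C \<Longrightarrow> \<beta> \<in> Cell C \<Longrightarrow> dom2 C \<beta> = cod2 C \<alpha> \<Longrightarrow> k \<in> Arr C \<Longrightarrow> tgt C k = src C (dom2 C \<alpha>) \<Longrightarrow>
   rwhisk C (vcmp C \<beta> \<alpha>) k = vcmp C (rwhisk C \<beta> k) (rwhisk C \<alpha> k)"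
  unfolding rwhisk_def
  using interchange[of "idc C k" "idc C k" \<alpha> \<beta>] by simp

lemma inv_unique: "\<theta> \<in> Cell C \<Longrightarrow> \<beta> \<in> Cell C \<Longrightarrow> \<gamma> \<in> Cell C \<Longrightarrow> dom2 C \<beta> = cod2 C \<theta> \<Longrightarrow>
   cod2 C \<gamma> = dom2 C \<theta> \<Longrightarrow> vcmp C \<beta> \<theta> = idc C (dom2 C \<theta>) \<Longrightarrow> vcmp C \<theta> \<gamma> = idc C (cod2 C \<theta>) \<Longrightarrow> \<beta> = \<gamma>"
proof -
  assume a: "\<theta> \<in> Cell C" "\<beta> \<in> Cell C" "\<gamma> \<in> Cell C" "dom2 C \<beta> = cod2 C \<theta>"
   "cod2 C \<gamma> = dom2 C \<theta>" "vcmp C \<beta> \<theta> = idc C (dom2 C \<theta>)" "vcmp C \<theta> \<gamma> = idc C (cod2 C \<theta>)"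
  have "\<beta> = vcmp C \<beta> (idc C (dom2 C \<beta>))" using a(2) vcmp_idc(2)[of \<beta>] by simp
  also have "\<dots> = vcmp C \<beta> (vcmp C \<theta> \<gamma>)" using a by simp
  also have "\<dots> = vcmp C (vcmp C \<beta> \<theta>) \<gamma>" by (rule vcmp_assoc) (use a in simp_all)
  also have "\<dots> = \<gamma>" using a(3,5,6) vcmp_idc(1)[of \<gamma>] by simp
  finally show ?thesis .
qed

lemma invE: "invertible2 C \<alpha> \<Longrightarrow> (\<And>\<beta>. \<beta> \<in> Cell C \<Longrightarrow> dom2 C \<beta> = cod2 C \<alpha> \<Longrightarrow> cod2 C \<beta> = dom2 C \<alpha> \<Longrightarrow>
   vcmp C \<beta> \<alpha> = idc C (dom2 C \<alpha>) \<Longrightarrow> vcmp C \<alpha> \<beta> = idc C (cod2 C \<alpha>) \<Longrightarrow> P) \<Longrightarrow> P"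
  unfolding invertible2_def cells_def by blast

lemma invI: "\<alpha> \<in> Cell C \<Longrightarrow> \<beta> \<in> Cell C \<Longrightarrow> dom2 C \<beta> = cod2 C \<alpha> \<Longrightarrow> cod2 C \<beta> = dom2 C \<alpha> \<Longrightarrow>
   vcmp C \<beta> \<alpha> = idc C (dom2 C \<alpha>) \<Longrightarrow> vcmp C \<alpha> \<beta> = idc C (cod2 C \<alpha>) \<Longrightarrow> invertible2 C \<alpha>"
  unfolding invertible2_def cells_def by blast

lemma inv_idc [simp]: "f \<in> Arr C \<Longrightarrow> invertible2 C (idc C f)"
  by (rule invI[of _ "idc C f"]) simp_all

lemma inv_rw: "invertible2 C \<alpha> \<Longrightarrow> k \<in> Arr C \<Longrightarrow> tgt C k = src C (dom2 C \<alpha>) \<Longrightarrow> invertible2 C (rwhisk C \<alpha> k)"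
proof -
  assume a: "invertible2 C \<alpha>" "k \<in> Arr C" "tgt C k = src C (dom2 C \<alpha>)"
  hence c: "\<alpha> \<in> Cell C" unfolding invertible2_def by blast
  from a(1) obtain \<beta> where b: "\<beta> \<in> Cell C" "dom2 C \<beta> = cod2 C \<alpha>" "cod2 C \<beta> = dom2 C \<alpha>"
   "vcmp C \<beta> \<alpha> = idc C (dom2 C \<alpha>)" "vcmp C \<alpha> \<beta> = idc C (cod2 C \<alpha>)" by (rule invE)
  have s: "src C (dom2 C \<beta>) = src C (dom2 C \<alpha>)" using b c cell_props by metis
  show ?thesis
    apply (rule invI[of _ "rwhisk C \<beta> k"])
    using a b c s cell_props by (simp_all add: rw_vcmp[symmetric])
qed


lemma pl_facts:
  assumes "pseudolimit C f P u v lam"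
  shows "f \<in> Arr C" "P \<in> Obj C" "u \<in> Arr C" "src C u = P" "tgt C u = src C f"
    "v \<in> Arr C" "src C v = P" "tgt C v = tgt C f" "lam \<in> Cell C" "dom2 C lam = v"
    "cod2 C lam = cmp C f u" "invertible2 C lam"
  using assms unfolding pseudolimit_def hom_def cells_def by auto

lemma pl_univ1:
  assumes "pseudolimit C f P u v lam" "X \<in> Obj C" "g \<in> Arr C" "src C g = X" "tgt C g = src C f"
    "h \<in> Arr C" "src C h = X" "tgt C h = tgt C f" "\<theta> \<in> Cell C" "dom2 C \<theta> = h" "cod2 C \<theta> = cmp C f g"
    "invertible2 C \<theta>"
  shows "\<exists>!k. k \<in> hom C X P \<and> cmp C u k = g \<and> cmp C v k = h \<and> rwhisk C lam k = \<theta>"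
proof -
  have "\<forall>X \<in> Obj C. \<forall>p \<in> hom C X (src C f). \<forall>q \<in> hom C X (tgt C f).
        \<forall>\<theta> \<in> cells C q (cmp C f p). invertible2 C \<theta> \<longrightarrow>
          (\<exists>!h. h \<in> hom C X P \<and> cmp C u h = p \<and> cmp C v h = q \<and> rwhisk C lam h = \<theta>)"
    using assms(1) unfolding pseudolimit_def by blast
  moreover have "g \<in> hom C X (src C f)" "h \<in> hom C X (tgt C f)" "\<theta> \<in> cells C h (cmp C f g)"
    using assms unfolding hom_def cells_def by auto
  ultimately show ?thesis using assms(2,12) by blast
qed

lemma lift_eq:
  assumes pl: "pseudolimit C f P u v lam"
    and li: "lamI \<in> Cell C" "dom2 C lamI = cmp C f u" "cod2 C lamI = v" "vcmp C lamI lam = idc C v"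
    and a: "a \<in> Cell C" "dom2 C a = u" "lwhisk C f a = lamI"
    and k: "k \<in> Arr C" "tgt C k = P"
    and al: "\<alpha> \<in> Cell C" "dom2 C \<alpha> = cmp C f (cmp C u k)" "cod2 C \<alpha> = cmp C v k"
      "vcmp C (rwhisk C lam k) \<alpha> = idc C (dom2 C \<alpha>)"
  shows "lwhisk C f (rwhisk C a k) = \<alpha>"
proof -
  note F = pl_facts[OF pl]
  have "lwhisk C f (rwhisk C a k) = rwhisk C (lwhisk C f a) k"
    by (rule lw_rw) (use a k F in simp_all)
  also have "\<dots> = rwhisk C lamI k" using a by simp
  also have "\<dots> = \<alpha>"
  proof (rule inv_unique[of "rwhisk C lam k"])
    show "rwhisk C lam k \<in> Cell C" using F k by simp
    show "rwhisk C lamI k \<in> Cell C" using F k li by simp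
    show "\<alpha> \<in> Cell C" by fact
    show "dom2 C (rwhisk C lamI k) = cod2 C (rwhisk C lam k)" using F k li by simp
    show "cod2 C \<alpha> = dom2 C (rwhisk C lam k)" using F k al by simp
    have "vcmp C (rwhisk C lamI k) (rwhisk C lam k) = rwhisk C (vcmp C lamI lam) k"
      using rw_vcmp[of lam lamI k] F k li by simp
    also have "\<dots> = idc C (cmp C v k)" using li F k by simp
    finally show "vcmp C (rwhisk C lamI k) (rwhisk C lam k) = idc C (dom2 C (rwhisk C lam k))"
      using F k by simp
    have "cmp C f (cmp C u k) = cmp C (cmp C f u) k" using F k by (simp add: cmp_assoc)
    then show "vcmp C (rwhisk C lam k) \<alpha> = idc C (cod2 C (rwhisk C lam k))"
      using F k al by simp
  qed
  finally show ?thesis .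
qed


lemma iso_from_lift:
  assumes pl: "pseudolimit C f P u v lam"
    and li: "lamI \<in> Cell C" "dom2 C lamI = cmp C f u" "cod2 C lamI = v" "vcmp C lamI lam = idc C v"
    and a: "a \<in> Cell C" "dom2 C a = u" "invertible2 C a" "lwhisk C f a = lamI"
  shows "repr_isofibration C f"
  unfolding repr_isofibration_def
proof (intro conjI ballI impI)
  note F = pl_facts[OF pl]
  show "f \<in> Arr C" using F by simp
  fix X g h \<alpha>
  assume X: "X \<in> Obj C" and g: "g \<in> hom C X (src C f)" and h: "h \<in> hom C X (tgt C f)"
    and al: "\<alpha> \<in> cells C (cmp C f g) h" and ia: "invertible2 C \<alpha>"
  have g': "g \<in> Arr C" "src C g = X" "tgt C g = src C f" using g unfolding hom_def by auto
  have h': "h \<in> Arr C" "src C h = X" "tgt C h = tgt C f" using h unfolding hom_def by auto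
  have al': "\<alpha> \<in> Cell C" "dom2 C \<alpha> = cmp C f g" "cod2 C \<alpha> = h" using al unfolding cells_def by auto
  obtain \<beta> where b: "\<beta> \<in> Cell C" "dom2 C \<beta> = cod2 C \<alpha>" "cod2 C \<beta> = dom2 C \<alpha>"
   "vcmp C \<beta> \<alpha> = idc C (dom2 C \<alpha>)" "vcmp C \<alpha> \<beta> = idc C (cod2 C \<alpha>)" using ia by (rule invE)
  have ib: "invertible2 C \<beta>" by (rule invI[of _ \<alpha>]) (use b al' in simp_all)
  obtain k where k: "k \<in> hom C X P" "cmp C u k = g" "cmp C v k = h" "rwhisk C lam k = \<beta>"
    using pl_univ1[OF pl X g' h' b(1) _ _ ib] b al' by auto
  have k': "k \<in> Arr C" "src C k = X" "tgt C k = P" using k unfolding hom_def by auto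
  have ca: "cod2 C a \<in> Arr C" "src C (cod2 C a) = P" "tgt C (cod2 C a) = src C f"
    using cell_props[OF a(1)] a F by auto
  show "\<exists>h'\<in>hom C X (src C f). \<exists>\<alpha>'\<in>cells C g h'. invertible2 C \<alpha>' \<and> lwhisk C f \<alpha>' = \<alpha>"
  proof (intro bexI conjI)
    show "cmp C (cod2 C a) k \<in> hom C X (src C f)" using ca k' unfolding hom_def by simp
    show "rwhisk C a k \<in> cells C g (cmp C (cod2 C a) k)" using a k' k F unfolding cells_def by simp
    show "invertible2 C (rwhisk C a k)" by (rule inv_rw) (use a k' F in simp_all)
    show "lwhisk C f (rwhisk C a k) = \<alpha>"
      by (rule lift_eq[OF pl li a(1,2,4) k'(1,3)]) (use al' k b in simp_all)
  qed
qed

lemma ncl_from_lift: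
  assumes pl: "pseudolimit C f P u v lam"
    and li: "lamI \<in> Cell C" "dom2 C lamI = cmp C f u" "cod2 C lamI = v" "vcmp C lamI lam = idc C v"
    and a: "a \<in> Cell C" "dom2 C a = u" "invertible2 C a" "lwhisk C f a = lamI"
    and i: "i \<in> Arr C" "src C i = src C f" "tgt C i = P" "cmp C u i = ide C (src C f)"
      "cmp C v i = f" "rwhisk C lam i = idc C f" "rwhisk C a i = idc C (ide C (src C f))"
  shows "\<exists>cl. normal_cleavage C f cl"
proof -
  note F = pl_facts[OF pl]
  define Q where "Q g \<alpha> k \<longleftrightarrow> k \<in> hom C (src C g) P \<and> cmp C u k = g \<and> cmp C v k = cod2 C \<alpha> \<and>
     vcmp C (rwhisk C lam k) \<alpha> = idc C (dom2 C \<alpha>) \<and> vcmp C \<alpha> (rwhisk C lam k) = idc C (cod2 C \<alpha>)"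
    for g \<alpha> k
  define cl where "cl g \<alpha> = (rwhisk C a (SOME k. Q g \<alpha> k), cmp C (cod2 C a) (SOME k. Q g \<alpha> k))" for g \<alpha>
  have ca: "cod2 C a \<in> Arr C" "src C (cod2 C a) = P" "tgt C (cod2 C a) = src C f"
    using cell_props[OF a(1)] a F by auto
  have key: "\<exists>k. Q g \<alpha> k \<and> (\<forall>k'. Q g \<alpha> k' \<longrightarrow> k' = k)"
    if X: "X \<in> Obj C" and g': "g \<in> Arr C" "src C g = X" "tgt C g = src C f"
      and h': "h \<in> Arr C" "src C h = X" "tgt C h = tgt C f"
      and al': "\<alpha> \<in> Cell C" "dom2 C \<alpha> = cmp C f g" "cod2 C \<alpha> = h" and ia: "invertible2 C \<alpha>"
    for X g h \<alpha>
  proof -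
    obtain \<beta> where b: "\<beta> \<in> Cell C" "dom2 C \<beta> = cod2 C \<alpha>" "cod2 C \<beta> = dom2 C \<alpha>"
     "vcmp C \<beta> \<alpha> = idc C (dom2 C \<alpha>)" "vcmp C \<alpha> \<beta> = idc C (cod2 C \<alpha>)" using ia by (rule invE)
    have ib: "invertible2 C \<beta>" by (rule invI[of _ \<alpha>]) (use b al' in simp_all)
    have U: "\<exists>!k. k \<in> hom C X P \<and> cmp C u k = g \<and> cmp C v k = h \<and> rwhisk C lam k = \<beta>"
      using pl_univ1[OF pl X g' h' b(1) _ _ ib] b al' by auto
    then obtain k where k: "k \<in> hom C X P" "cmp C u k = g" "cmp C v k = h" "rwhisk C lam k = \<beta>"
      by auto
    have "Q g \<alpha> k" unfolding Q_def using k b al' g' by simp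
    moreover have "k' = k" if q: "Q g \<alpha> k'" for k'
    proof -
      have k': "k' \<in> Arr C" "src C k' = X" "tgt C k' = P" "cmp C u k' = g" "cmp C v k' = h"
        "vcmp C (rwhisk C lam k') \<alpha> = idc C (dom2 C \<alpha>)"
        "vcmp C \<alpha> (rwhisk C lam k') = idc C (cod2 C \<alpha>)"
        using q g' al' unfolding Q_def hom_def by auto
      have "cmp C (cmp C f u) k' = cmp C f g" using cmp_assoc[of k' u f] F k' by simp
      hence "rwhisk C lam k' = \<beta>"
        using inv_unique[of \<alpha> "rwhisk C lam k'" \<beta>] k' F b al' by simp
      with k' U k show ?thesis unfolding hom_def by auto
    qed
    ultimately show ?thesis by blast
  qed
  have some: "(SOME k. Q g \<alpha> k) = k"
    if X: "X \<in> Obj C" and g': "g \<in> Arr C" "src C g = X" "tgt C g = src C f"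
      and h': "h \<in> Arr C" "src C h = X" "tgt C h = tgt C f"
      and al': "\<alpha> \<in> Cell C" "dom2 C \<alpha> = cmp C f g" "cod2 C \<alpha> = h" and ia: "invertible2 C \<alpha>"
      and q: "Q g \<alpha> k"
    for X g h \<alpha> k
  proof -
    obtain k0 where "Q g \<alpha> k0" "\<forall>k'. Q g \<alpha> k' \<longrightarrow> k' = k0" using key[OF X g' h' al' ia] by blast
    then show ?thesis using q someI[of "Q g \<alpha>" k] by metis
  qed
  have "normal_cleavage C f cl"
    unfolding normal_cleavage_def cleavage_def
  proof (intro conjI ballI impI)
    show "f \<in> Arr C" using F by simp
  next
    fix X g
    assume X: "X \<in> Obj C" and g: "g \<in> hom C X (src C f)"
    have g': "g \<in> Arr C" "src C g = X" "tgt C g = src C f" using g unfolding hom_def by auto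
    have fg: "cmp C f g \<in> Arr C" "src C (cmp C f g) = X" "tgt C (cmp C f g) = tgt C f" using g' F by auto
    have ig: "cmp C i g \<in> Arr C" "src C (cmp C i g) = X" "tgt C (cmp C i g) = P" using g' i by auto
    have ug: "cmp C u (cmp C i g) = g" using cmp_assoc[of g i u] g' i F by simp
    have vg: "cmp C v (cmp C i g) = cmp C f g" using cmp_assoc[of g i v] g' i F by simp
    have lg: "rwhisk C lam (cmp C i g) = idc C (cmp C f g)"
      using rw_rw[of lam i g] g' i F by simp
    have "Q g (idc C (cmp C f g)) (cmp C i g)"
      unfolding Q_def hom_def using ig ug vg lg fg g' by simp
    hence s: "(SOME k. Q g (idc C (cmp C f g)) k) = cmp C i g"
      using some[where \<alpha>="idc C (cmp C f g)", OF X g' fg] fg by simp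
    have "rwhisk C a (cmp C i g) = rwhisk C (rwhisk C a i) g"
      using rw_rw[of a i g] g' i F a by simp
    also have "\<dots> = idc C g" using i g' F arr_st(1)[of f] by simp
    finally show "fst (cl g (idc C (cmp C f g))) = idc C g" unfolding cl_def s by simp
  next
    fix X g h \<alpha>
    assume X: "X \<in> Obj C" and g: "g \<in> hom C X (src C f)" and h: "h \<in> hom C X (tgt C f)"
      and al: "\<alpha> \<in> cells C (cmp C f g) h" and ia: "invertible2 C \<alpha>"
    have g': "g \<in> Arr C" "src C g = X" "tgt C g = src C f" using g unfolding hom_def by auto
    have h': "h \<in> Arr C" "src C h = X" "tgt C h = tgt C f" using h unfolding hom_def by auto
    have al': "\<alpha> \<in> Cell C" "dom2 C \<alpha> = cmp C f g" "cod2 C \<alpha> = h" using al unfolding cells_def by auto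
    obtain k where Qk: "Q g \<alpha> k" using key[OF X g' h' al' ia] by blast
    have sk: "(SOME k. Q g \<alpha> k) = k" by (rule some[OF X g' h' al' ia Qk])
    have k': "k \<in> Arr C" "src C k = X" "tgt C k = P" "cmp C u k = g" "cmp C v k = h"
        "vcmp C (rwhisk C lam k) \<alpha> = idc C (dom2 C \<alpha>)"
        "vcmp C \<alpha> (rwhisk C lam k) = idc C (cod2 C \<alpha>)"
      using Qk g' al' unfolding Q_def hom_def by auto
    have clk: "cl g \<alpha> = (rwhisk C a k, cmp C (cod2 C a) k)" unfolding cl_def sk ..
    show "snd (cl g \<alpha>) \<in> hom C X (src C f)" unfolding clk hom_def using ca k' by simp
    show "fst (cl g \<alpha>) \<in> cells C g (snd (cl g \<alpha>))" unfolding clk cells_def using a k' F by simp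
    show "invertible2 C (fst (cl g \<alpha>))" unfolding clk by simp (rule inv_rw, use a k' F in simp_all)
    show "lwhisk C f (fst (cl g \<alpha>)) = \<alpha>" unfolding clk fst_conv
      by (rule lift_eq[OF pl li a(1,2,4) k'(1,3)]) (use al' k' in simp_all)
    fix Y k2 assume Y: "Y \<in> Obj C" and k2: "k2 \<in> hom C Y X"
    have k2': "k2 \<in> Arr C" "src C k2 = Y" "tgt C k2 = X" using k2 unfolding hom_def by auto
    have gk: "cmp C g k2 \<in> Arr C" "src C (cmp C g k2) = Y" "tgt C (cmp C g k2) = src C f"
      using g' k2' by auto
    have hk: "cmp C h k2 \<in> Arr C" "src C (cmp C h k2) = Y" "tgt C (cmp C h k2) = tgt C f"
      using h' k2' by auto
    have ak: "rwhisk C \<alpha> k2 \<in> Cell C" "dom2 C (rwhisk C \<alpha> k2) = cmp C f (cmp C g k2)"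
      "cod2 C (rwhisk C \<alpha> k2) = cmp C h k2"
      using al' k2' g' F cmp_assoc[of k2 g f] by simp_all
    have iak: "invertible2 C (rwhisk C \<alpha> k2)" by (rule inv_rw) (use ia al' k2' g' F in simp_all)
    have kk: "cmp C k k2 \<in> Arr C" "src C (cmp C k k2) = Y" "tgt C (cmp C k k2) = P" using k' k2' by auto
    have lk: "rwhisk C lam (cmp C k k2) = rwhisk C (rwhisk C lam k) k2"
      using rw_rw[of lam k k2] k' k2' F by simp
    have th: "rwhisk C lam k \<in> Cell C" "dom2 C (rwhisk C lam k) = h"
       "cod2 C (rwhisk C lam k) = cmp C (cmp C f u) k" using k' F by simp_all
    have e1: "vcmp C (rwhisk C lam (cmp C k k2)) (rwhisk C \<alpha> k2) = idc C (dom2 C (rwhisk C \<alpha> k2))"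
    proof -
      have "vcmp C (rwhisk C lam (cmp C k k2)) (rwhisk C \<alpha> k2) = rwhisk C (vcmp C (rwhisk C lam k) \<alpha>) k2"
        unfolding lk by (rule rw_vcmp[symmetric]) (use th al' k2' g' F in simp_all)
      also have "\<dots> = idc C (cmp C (dom2 C \<alpha>) k2)" using k' al' k2' g' F by simp
      finally show ?thesis using al' k2' g' F by simp
    qed
    have cfu: "cmp C (cmp C f u) k = cmp C f g" using cmp_assoc[of k u f] F k' by simp
    have e2: "vcmp C (rwhisk C \<alpha> k2) (rwhisk C lam (cmp C k k2)) = idc C (cod2 C (rwhisk C \<alpha> k2))"
    proof -
      have "vcmp C (rwhisk C \<alpha> k2) (rwhisk C lam (cmp C k k2)) = rwhisk C (vcmp C \<alpha> (rwhisk C lam k)) k2"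
        unfolding lk by (rule rw_vcmp[symmetric]) (use th al' k2' g' h' F k' cfu in simp_all)
      also have "\<dots> = idc C (cmp C h k2)" using k' al' k2' h' F by simp
      finally show ?thesis using ak by simp
    qed
    have "Q (cmp C g k2) (rwhisk C \<alpha> k2) (cmp C k k2)"
      unfolding Q_def hom_def using kk gk ak e1 e2 cmp_assoc[of k2 k u] cmp_assoc[of k2 k v] k' k2' F
      by simp
    hence s2: "(SOME k. Q (cmp C g k2) (rwhisk C \<alpha> k2) k) = cmp C k k2"
      using some[OF Y gk hk ak iak] by simp
    show "cl (cmp C g k2) (rwhisk C \<alpha> k2) = (rwhisk C (fst (cl g \<alpha>)) k2, cmp C (snd (cl g \<alpha>)) k2)"
      unfolding clk cl_def s2 fst_conv snd_conv
      using rw_rw[of a k k2] cmp_assoc[of k2 k "cod2 C a"] a ca k' k2' F sk by simp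
  qed
  thus ?thesis by blast
qed

end

locale tf = fixes L :: "('o1, 'm1, 'c1, 'x) twocat_scheme" and K :: "('o2, 'm2, 'c2, 'y) twocat_scheme"
  and U :: "('o1, 'm1, 'c1, 'o2, 'm2, 'c2, 'z) twofun_scheme"
  assumes tf: "two_functor L K U"
begin

sublocale L: tc L using tf unfolding two_functor_def by (unfold_locales) blast
sublocale K: tc K using tf unfolding two_functor_def by (unfold_locales) blast

lemmas fax = tf[unfolded two_functor_def]

lemma fo_in [simp]: "a \<in> Obj L \<Longrightarrow> fo U a \<in> Obj K"
  using fax by blast

lemma fm_in [simp]: "f \<in> Arr L \<Longrightarrow> fm U f \<in> Arr K" "f \<in> Arr L \<Longrightarrow> src K (fm U f) = fo U (src L f)"
  "f \<in> Arr L \<Longrightarrow> tgt K (fm U f) = fo U (tgt L f)"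
  using fax unfolding hom_def by blast+

lemma fc_in [simp]: "\<alpha> \<in> Cell L \<Longrightarrow> fc U \<alpha> \<in> Cell K" "\<alpha> \<in> Cell L \<Longrightarrow> dom2 K (fc U \<alpha>) = fm U (dom2 L \<alpha>)"
  "\<alpha> \<in> Cell L \<Longrightarrow> cod2 K (fc U \<alpha>) = fm U (cod2 L \<alpha>)"
  using fax unfolding cells_def by blast+

lemma fm_ide [simp]: "a \<in> Obj L \<Longrightarrow> fm U (ide L a) = ide K (fo U a)"
  using fax by blast

lemma fm_cmp [simp]: "f \<in> Arr L \<Longrightarrow> g \<in> Arr L \<Longrightarrow> src L g = tgt L f \<Longrightarrow> fm U (cmp L g f) = cmp K (fm U g) (fm U f)"
  using fax by blast

lemma fc_idc [simp]: "f \<in> Arr L \<Longrightarrow> fc U (idc L f) = idc K (fm U f)"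
  using fax by blast

lemma fc_vcmp [simp]: "\<alpha> \<in> Cell L \<Longrightarrow> \<beta> \<in> Cell L \<Longrightarrow> dom2 L \<beta> = cod2 L \<alpha> \<Longrightarrow>
   fc U (vcmp L \<beta> \<alpha>) = vcmp K (fc U \<beta>) (fc U \<alpha>)"
  using fax by blast

lemma fc_hcmp [simp]: "\<alpha> \<in> Cell L \<Longrightarrow> \<beta> \<in> Cell L \<Longrightarrow> src L (dom2 L \<beta>) = tgt L (dom2 L \<alpha>) \<Longrightarrow>
   fc U (hcmp L \<beta> \<alpha>) = hcmp K (fc U \<beta>) (fc U \<alpha>)"
  using fax by blast

lemma fc_rw [simp]: "\<alpha> \<in> Cell L \<Longrightarrow> k \<in> Arr L \<Longrightarrow> tgt L k = src L (dom2 L \<alpha>) \<Longrightarrow>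
   fc U (rwhisk L \<alpha> k) = rwhisk K (fc U \<alpha>) (fm U k)"
  unfolding rwhisk_def by simp

lemma fc_lw [simp]: "\<alpha> \<in> Cell L \<Longrightarrow> f \<in> Arr L \<Longrightarrow> src L f = tgt L (dom2 L \<alpha>) \<Longrightarrow>
   fc U (lwhisk L f \<alpha>) = lwhisk K (fm U f) (fc U \<alpha>)"
  unfolding lwhisk_def by simp

lemma fc_inv: "invertible2 L \<alpha> \<Longrightarrow> invertible2 K (fc U \<alpha>)"
proof -
  assume ia: "invertible2 L \<alpha>"
  hence c: "\<alpha> \<in> Cell L" unfolding invertible2_def by blast
  from ia obtain \<beta> where b: "\<beta> \<in> Cell L" "dom2 L \<beta> = cod2 L \<alpha>" "cod2 L \<beta> = dom2 L \<alpha>"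
   "vcmp L \<beta> \<alpha> = idc L (dom2 L \<alpha>)" "vcmp L \<alpha> \<beta> = idc L (cod2 L \<alpha>)" by (rule L.invE)
  show ?thesis
  proof (rule K.invI[of _ "fc U \<beta>"])
    show "vcmp K (fc U \<beta>) (fc U \<alpha>) = idc K (dom2 K (fc U \<alpha>))"
      using fc_vcmp[of \<alpha> \<beta>] b c L.cell_props by simp
    show "vcmp K (fc U \<alpha>) (fc U \<beta>) = idc K (cod2 K (fc U \<alpha>))"
      using fc_vcmp[of \<beta> \<alpha>] b c L.cell_props by simp
  qed (use b c in simp_all)
qed

lemma pres_equiv: "equivalence L f \<Longrightarrow> equivalence K (fm U f)"
proof -
  assume e: "equivalence L f"
  then obtain g \<eta> \<epsilon> where f: "f \<in> Arr L" and g: "g \<in> hom L (tgt L f) (src L f)"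
    and \<eta>: "\<eta> \<in> cells L (ide L (src L f)) (cmp L g f)" "invertible2 L \<eta>"
    and \<epsilon>: "\<epsilon> \<in> cells L (cmp L f g) (ide L (tgt L f))" "invertible2 L \<epsilon>"
    unfolding equivalence_def by blast
  have g': "g \<in> Arr L" "src L g = tgt L f" "tgt L g = src L f" using g unfolding hom_def by auto
  have o: "src L f \<in> Obj L" "tgt L f \<in> Obj L" using f L.arr_st by auto
  show ?thesis unfolding equivalence_def
  proof (intro conjI bexI)
    show "fm U f \<in> Arr K" using f by simp
    show "fm U g \<in> hom K (tgt K (fm U f)) (src K (fm U f))" using f g' unfolding hom_def by simp
    show "fc U \<eta> \<in> cells K (ide K (src K (fm U f))) (cmp K (fm U g) (fm U f))"
      using \<eta> f g' o unfolding cells_def by simp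
    show "fc U \<epsilon> \<in> cells K (cmp K (fm U f) (fm U g)) (ide K (tgt K (fm U f)))"
      using \<epsilon> f g' o unfolding cells_def by simp
  qed (use \<eta> \<epsilon> fc_inv in auto)
qed

lemma pres_inj: "injective_equivalence L f \<Longrightarrow> injective_equivalence K (fm U f)"
  unfolding injective_equivalence_def
proof (elim conjE bexE, intro conjI bexI)
  fix r assume e: "equivalence L f" and r: "r \<in> hom L (tgt L f) (src L f)" "cmp L r f = ide L (src L f)"
  have f: "f \<in> Arr L" using e unfolding equivalence_def by blast
  have r': "r \<in> Arr L" "src L r = tgt L f" "tgt L r = src L f" using r unfolding hom_def by auto
  show "equivalence K (fm U f)" using e pres_equiv by blast
  show "fm U r \<in> hom K (tgt K (fm U f)) (src K (fm U f))" using f r' unfolding hom_def by simp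
  show "cmp K (fm U r) (fm U f) = ide K (src K (fm U f))"
    using f r' r(2) fm_cmp[of f r] L.arr_st by simp
qed

lemma pres_retr: "retract_equivalence L f \<Longrightarrow> retract_equivalence K (fm U f)"
  unfolding retract_equivalence_def
proof (elim conjE bexE, intro conjI bexI)
  fix r assume e: "equivalence L f" and r: "r \<in> hom L (tgt L f) (src L f)" "cmp L f r = ide L (tgt L f)"
  have f: "f \<in> Arr L" using e unfolding equivalence_def by blast
  have r': "r \<in> Arr L" "src L r = tgt L f" "tgt L r = src L f" using r unfolding hom_def by auto
  show "equivalence K (fm U f)" using e pres_equiv by blast
  show "fm U r \<in> hom K (tgt K (fm U f)) (src K (fm U f))" using f r' unfolding hom_def by simp
  show "cmp K (fm U f) (fm U r) = ide K (tgt K (fm U f))"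
    using f r' r(2) fm_cmp[of r f] L.arr_st by simp
qed


lemma pres_fib:
  assumes hp: "has_pseudolimits_of_arrows L" and pp: "preserves_pseudolimits_of_arrows L K U"
    and f: "f \<in> Arr L"
  shows "(repr_isofibration L f \<longrightarrow> repr_isofibration K (fm U f)) \<and>
         (normal_isofibration L f \<longrightarrow> normal_isofibration K (fm U f))"
proof -
  obtain P u v lam where pl: "pseudolimit L f P u v lam" using hp f unfolding has_pseudolimits_of_arrows_def by blast
  have plK: "pseudolimit K (fm U f) (fo U P) (fm U u) (fm U v) (fc U lam)"
    using pp pl unfolding preserves_pseudolimits_of_arrows_def by blast
  note F = L.pl_facts[OF pl]
  obtain lamI where li: "lamI \<in> Cell L" "dom2 L lamI = cmp L f u" "cod2 L lamI = v"
    "vcmp L lamI lam = idc L v" "vcmp L lam lamI = idc L (cmp L f u)"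
    using F(12) by (rule L.invE) (use F in simp)
  have ili: "invertible2 L lamI" by (rule L.invI[of _ lam]) (use li F in simp_all)
  have liK: "fc U lamI \<in> Cell K" "dom2 K (fc U lamI) = cmp K (fm U f) (fm U u)"
    "cod2 K (fc U lamI) = fm U v" "vcmp K (fc U lamI) (fc U lam) = idc K (fm U v)"
    using li F fc_vcmp[of lam lamI] by simp_all
  have A: "repr_isofibration K (fm U f)" if r: "repr_isofibration L f"
  proof -
    have "\<forall>X \<in> Obj L. \<forall>g \<in> hom L X (src L f). \<forall>h \<in> hom L X (tgt L f).
        \<forall>\<alpha> \<in> cells L (cmp L f g) h. invertible2 L \<alpha> \<longrightarrow>
          (\<exists>h' \<in> hom L X (src L f). \<exists>\<alpha>' \<in> cells L g h'.
             invertible2 L \<alpha>' \<and> lwhisk L f \<alpha>' = \<alpha>)" using r unfolding repr_isofibration_def by blast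
    moreover have "u \<in> hom L P (src L f)" "v \<in> hom L P (tgt L f)" "lamI \<in> cells L (cmp L f u) v"
      using F li unfolding hom_def cells_def by auto
    ultimately obtain p a where a: "a \<in> cells L u p" "invertible2 L a" "lwhisk L f a = lamI"
      using F(2) ili by blast
    have a': "a \<in> Cell L" "dom2 L a = u" using a unfolding cells_def by auto
    show ?thesis
      by (rule K.iso_from_lift[OF plK liK, of "fc U a"])
        (use a a' F fc_inv fc_lw[of a f] in simp_all)
  qed
  have B: "\<exists>cl. normal_cleavage K (fm U f) cl" if n: "normal_isofibration L f"
  proof -
    obtain cl where ncl: "normal_cleavage L f cl" using n unfolding normal_isofibration_def by blast
    have cleav: "\<forall>X \<in> Obj L. \<forall>g \<in> hom L X (src L f). \<forall>h \<in> hom L X (tgt L f).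
        \<forall>\<alpha> \<in> cells L (cmp L f g) h. invertible2 L \<alpha> \<longrightarrow>
          snd (cl g \<alpha>) \<in> hom L X (src L f) \<and> fst (cl g \<alpha>) \<in> cells L g (snd (cl g \<alpha>)) \<and>
          invertible2 L (fst (cl g \<alpha>)) \<and> lwhisk L f (fst (cl g \<alpha>)) = \<alpha> \<and>
          (\<forall>Y \<in> Obj L. \<forall>k \<in> hom L Y X.
             cl (cmp L g k) (rwhisk L \<alpha> k) =
               (rwhisk L (fst (cl g \<alpha>)) k, cmp L (snd (cl g \<alpha>)) k))"
      and norm: "\<forall>X \<in> Obj L. \<forall>g \<in> hom L X (src L f).
        fst (cl g (idc L (cmp L f g))) = idc L g"
      using ncl unfolding normal_cleavage_def cleavage_def by blast+
    have "u \<in> hom L P (src L f)" "v \<in> hom L P (tgt L f)" "lamI \<in> cells L (cmp L f u) v"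
      using F li unfolding hom_def cells_def by auto
    then have c: "snd (cl u lamI) \<in> hom L P (src L f)" "fst (cl u lamI) \<in> cells L u (snd (cl u lamI))"
          "invertible2 L (fst (cl u lamI))" "lwhisk L f (fst (cl u lamI)) = lamI"
          "\<forall>Y \<in> Obj L. \<forall>k \<in> hom L Y P.
             cl (cmp L u k) (rwhisk L lamI k) =
               (rwhisk L (fst (cl u lamI)) k, cmp L (snd (cl u lamI)) k)"
      using cleav F(2) ili by blast+
    define a where "a = fst (cl u lamI)"
    have a': "a \<in> Cell L" "dom2 L a = u" "invertible2 L a" "lwhisk L f a = lamI"
      using c unfolding a_def cells_def by auto
    have oA: "src L f \<in> Obj L" "tgt L f \<in> Obj L" using f L.arr_st by auto
    have "\<exists>!k. k \<in> hom L (src L f) P \<and> cmp L u k = ide L (src L f) \<and> cmp L v k = f \<and>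
            rwhisk L lam k = idc L f"
      by (rule L.pl_univ1[OF pl oA(1)]) (use f oA in simp_all)
    then obtain i where i: "i \<in> hom L (src L f) P" "cmp L u i = ide L (src L f)" "cmp L v i = f"
      "rwhisk L lam i = idc L f" by blast
    have i': "i \<in> Arr L" "src L i = src L f" "tgt L i = P" using i unfolding hom_def by auto
    have lIi: "rwhisk L lamI i = idc L f"
    proof (rule L.inv_unique[of "idc L f"])
      have "vcmp L (rwhisk L lamI i) (rwhisk L lam i) = rwhisk L (vcmp L lamI lam) i"
        by (rule L.rw_vcmp[symmetric]) (use li F i' in simp_all)
      also have "\<dots> = idc L f" using li F i' i by simp
      finally show "vcmp L (rwhisk L lamI i) (idc L f) = idc L (dom2 L (idc L f))" using i f by simp
      have "cmp L (cmp L f u) i = f" using L.cmp_assoc[of i u f] i' i F oA by simp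
      then show "dom2 L (rwhisk L lamI i) = cod2 L (idc L f)" using li F i' f by simp
    qed (use f li F i' in simp_all)
    have "cl (cmp L u i) (rwhisk L lamI i) = (rwhisk L a i, cmp L (snd (cl u lamI)) i)"
      using c(5) oA i(1) unfolding a_def by blast
    hence "cl (ide L (src L f)) (idc L (cmp L f (ide L (src L f)))) = (rwhisk L a i, cmp L (snd (cl u lamI)) i)"
      using i(2) lIi f by simp
    moreover have "fst (cl (ide L (src L f)) (idc L (cmp L f (ide L (src L f))))) = idc L (ide L (src L f))"
      using norm oA unfolding hom_def by simp
    ultimately have ai: "rwhisk L a i = idc L (ide L (src L f))" by simp
    show ?thesis
    proof (rule K.ncl_from_lift[OF plK liK, of "fc U a" "fm U i"])
      show "rwhisk K (fc U a) (fm U i) = idc K (ide K (src K (fm U f)))"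
        using fc_rw[of a i] ai a' i' F oA by simp
      show "cmp K (fm U u) (fm U i) = ide K (src K (fm U f))"
        using fm_cmp[of i u] i i' F oA by simp
      show "cmp K (fm U v) (fm U i) = fm U f"
        using fm_cmp[of i v] i i' F oA by simp
      show "rwhisk K (fc U lam) (fm U i) = idc K (fm U f)"
        using fc_rw[of lam i] i i' F oA f by simp
    qed (use a' i' F fc_inv fc_lw[of a f] in simp_all)
  qed
  show ?thesis using A B unfolding normal_isofibration_def by blast
qed

end


theorem proposition3p15:
  fixes L :: "('o1, 'm1, 'c1) twocat"
    and K :: "('o2, 'm2, 'c2) twocat"
    and U :: "('o1, 'm1, 'c1, 'o2, 'm2, 'c2) twofun"
  assumes "two_category L" and "two_category K"
    and "has_pseudolimits_of_arrows L" and "has_pseudolimits_of_arrows K"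
    and "two_functor L K U"
    and "preserves_pseudolimits_of_arrows L K U"
  shows "\<forall>f \<in> Arr L.
           (equivalence L f \<longrightarrow> equivalence K (fm U f)) \<and>
           (injective_equivalence L f \<longrightarrow> injective_equivalence K (fm U f)) \<and>
           (retract_equivalence L f \<longrightarrow> retract_equivalence K (fm U f)) \<and>
           (normal_retract_equivalence L f \<longrightarrow> normal_retract_equivalence K (fm U f)) \<and>
           (repr_isofibration L f \<longrightarrow> repr_isofibration K (fm U f)) \<and>
           (normal_isofibration L f \<longrightarrow> normal_isofibration K (fm U f))"
proof
  fix f assume f: "f \<in> Arr L"
  interpret tf L K U by unfold_locales (rule assms(5))
  have fib: "(repr_isofibration L f \<longrightarrow> repr_isofibration K (fm U f)) \<and>
         (normal_isofibration L f \<longrightarrow> normal_isofibration K (fm U f))"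
    by (rule pres_fib[OF assms(3) assms(6) f])
  show "(equivalence L f \<longrightarrow> equivalence K (fm U f)) \<and>
           (injective_equivalence L f \<longrightarrow> injective_equivalence K (fm U f)) \<and>
           (retract_equivalence L f \<longrightarrow> retract_equivalence K (fm U f)) \<and>
           (normal_retract_equivalence L f \<longrightarrow> normal_retract_equivalence K (fm U f)) \<and>
           (repr_isofibration L f \<longrightarrow> repr_isofibration K (fm U f)) \<and>
           (normal_isofibration L f \<longrightarrow> normal_isofibration K (fm U f))"
    using fib pres_equiv pres_inj pres_retr unfolding normal_retract_equivalence_def by blast
qed

end
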